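(* Let $\alpha>0$. The parallel algorithm ParPolyPA (described in the context) samples each host $h$ with probability $\deg(h)^\alpha/W$, i.e., for every index $i$, the host of the $i$-th sample equals node $h$ with probability $\deg_i(h)^\alpha/W_i$, where $\deg_i$ and $W_i$ refer to the graph on which sample $i$ is to be drawn (the graph containing all earlier samples).
   Context: Polynomial preferential attachment: start from a seed graph $G_0$ with $n_0$ nodes; new nodes arrive one at a time, each attached to one earlier node (host) chosen with probability proportional to $\deg(h)^\alpha$. For a sample index $i$, let $\deg_i(v)$, $W_i=\sum_v\deg_i(v)^\alpha$, $n_i$ and $\Delta_i$ (maximum degree) refer to the graph on which the $i$-th host is to be drawn. Proposal lists: the algorithm stores a list $P$ of nodes with multiplicities $c(v)$, and $w(v)=\deg(v)^\alpha/c(v)$, maintained as follows: initially each seed node $v$ appears $\lceil\deg_0(v)^\alpha n_0/W_0\rceil$ times; a host is drawn from a distribution by choosing a uniform random position of (the relevant part of) $P$ and accepting via rejection sampling; after adding a new node it is appended once and its host $h$ is appended while $w(h)$ exceeds the current value $W/n$. ParPolyPA processes the samples in batches. Let $s$ be the index of the first sample of a batch, and define $W_i'=W_s+2(i-s)$ if $\alpha\le 1$ and $W_i'=W_s+2\big((\Delta_s+i-s)^\alpha-\Delta_s^\alpha\big)$ if $\alpha>1$. Phase 1: indices $i=s,s+1,\dots$ are processed by the processors; for index $i$ a coin with heads probability $W_s/W_i'$ is flipped; on heads, the host of sample $i$ is drawn from $P_1(h)=\deg_s(h)^\alpha/W_s$ (rejection sampling from the proposal list as it was at the start of the batch); on tails,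 a shared variable $l$ is set to $\min\{l,i\}$ (initially $l=N+1$) and processing of indices $\ge l$ stops. Phase 2: all samples with index $<l$ are added to the graph and the proposal list is updated. Phase 3: for sample $l$ (if any), with probability $(W_l-W_s)/(W_l'-W_s)$ the host is drawn from $P_2(h)=(\deg_l(h)^\alpha-\deg_s(h)^\alpha)/(W_l-W_s)$, and otherwise from $P_3(h)=\deg_l(h)^\alpha/W_l$; the node and edge are added and the proposal list updated. Then the next batch starts with $s\gets l$. *)

theory Defs
  imports "HOL-Probability.Probability_Mass_Function"
begin

text \<open>The seed graph G0 is a simple graph with edge relation E
  on the nodes 0..<n0. Sample number j (1-based) creates the new node n0 + j - 1 and attaches it
  to a host. A run is recorded as the list hs of hosts chosen so far; the graph on which the
  next sample (index length hs + 1) is drawn is G0 plus these length hs nodes and edges.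
  Only degrees matter for the host distributions.\<close>

definition seed_deg :: "(nat \<times> nat) set \<Rightarrow> nat \<Rightarrow> nat" where
  "seed_deg E v = card {u. (v, u) \<in> E}"

definition pa_deg :: "(nat \<times> nat) set \<Rightarrow> nat \<Rightarrow> nat list \<Rightarrow> nat \<Rightarrow> nat" where
  "pa_deg E n0 hs v =
     seed_deg E v + count_list hs v + (if n0 \<le> v \<and> v < n0 + length hs then 1 else 0)"

definition pa_W :: "real \<Rightarrow> (nat \<times> nat) set \<Rightarrow> nat \<Rightarrow> nat list \<Rightarrow> real" where
  "pa_W \<alpha> E n0 hs = (\<Sum>v<n0 + length hs. real (pa_deg E n0 hs v) powr \<alpha>)"

definition pa_Delta :: "(nat \<times> nat) set \<Rightarrow> nat \<Rightarrow> nat list \<Rightarrow> nat" where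
  "pa_Delta E n0 hs = Max (pa_deg E n0 hs ` {..<n0 + length hs})"

definition weighted_pmf :: "(nat \<Rightarrow> real) \<Rightarrow> nat set \<Rightarrow> nat pmf" where
  "weighted_pmf f A = embed_pmf (\<lambda>v. if v \<in> A then f v / (\<Sum>u\<in>A. f u) else 0)"

primrec seq_pmf :: "'a pmf list \<Rightarrow> 'a list pmf" where
  "seq_pmf [] = return_pmf []"
| "seq_pmf (p # ps) = bind_pmf p (\<lambda>x. bind_pmf (seq_pmf ps) (\<lambda>xs. return_pmf (x # xs)))"

definition pa_Wprime :: "real \<Rightarrow> (nat \<times> nat) set \<Rightarrow> nat \<Rightarrow> nat list \<Rightarrow> nat \<Rightarrow> real" where
  "pa_Wprime \<alpha> E n0 hs i =
     (let s = Suc (length hs); Ws = pa_W \<alpha> E n0 hs; \<Delta> = real (pa_Delta E n0 hs) in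
      if \<alpha> \<le> 1 then Ws + 2 * real (i - s)
      else Ws + 2 * ((\<Delta> + real (i - s)) powr \<alpha> - \<Delta> powr \<alpha>))"

text \<open>Phase 1 (parallel): for every index i in s..N a coin with heads
  probability W_s / W'_i and an independent draw from P1 (the exact target of the rejection
  sampler from the proposal list at the start of the batch); l is the first index with tails
  (N+1 if none); the draws of indices < l are kept (Phase 2). Phase 3 draws sample l.\<close>
definition par_batch :: "real \<Rightarrow> (nat \<times> nat) set \<Rightarrow> nat \<Rightarrow> nat \<Rightarrow> nat list \<Rightarrow> nat list pmf" where
  "par_batch \<alpha> E n0 N hs =
    (let s = Suc (length hs);
         Ws = pa_W \<alpha> E n0 hs;
         P1 = weighted_pmf (\<lambda>v. real (pa_deg E n0 hs v) powr \<alpha>) {..<n0 + length hs}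
     in bind_pmf (seq_pmf (map (\<lambda>i. bernoulli_pmf (Ws / pa_Wprime \<alpha> E n0 hs i)) [s..<Suc N]))
        (\<lambda>coins. bind_pmf (seq_pmf (map (\<lambda>i. P1) [s..<Suc N]))
        (\<lambda>draws.
          (let m = length (takeWhile id coins);
               l = s + m;
               hs1 = hs @ take m draws
           in if l \<le> N then
                bind_pmf (bernoulli_pmf ((pa_W \<alpha> E n0 hs1 - Ws) / (pa_Wprime \<alpha> E n0 hs l - Ws)))
                 (\<lambda>c. bind_pmf
                   (if c then weighted_pmf
                        (\<lambda>v. real (pa_deg E n0 hs1 v) powr \<alpha> - real (pa_deg E n0 hs v) powr \<alpha>)
                        {..<n0 + length hs1}
                    else weighted_pmf (\<lambda>v. real (pa_deg E n0 hs1 v) powr \<alpha>) {..<n0 + length hs1})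
                   (\<lambda>h. return_pmf (hs1 @ [h])))
              else return_pmf hs1))))"

text \<open>Iterate batches (each batch adds at least one sample, so N rounds of fuel suffice).\<close>
primrec par_run :: "real \<Rightarrow> (nat \<times> nat) set \<Rightarrow> nat \<Rightarrow> nat \<Rightarrow> nat \<Rightarrow> nat list \<Rightarrow> nat list pmf" where
  "par_run \<alpha> E n0 N 0 hs = return_pmf hs"
| "par_run \<alpha> E n0 N (Suc k) hs =
     (if N \<le> length hs then return_pmf hs
      else bind_pmf (par_batch \<alpha> E n0 N hs) (par_run \<alpha> E n0 N k))"

definition ParPolyPA :: "real \<Rightarrow> (nat \<times> nat) set \<Rightarrow> nat \<Rightarrow> nat \<Rightarrow> nat list pmf" where
  "ParPolyPA \<alpha> E n0 N = par_run \<alpha> E n0 N N []"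

end

theory Submission
  imports Defs
begin

definition valid :: "nat \<Rightarrow> nat list \<Rightarrow> bool" where
  "valid n0 ys \<longleftrightarrow> (\<forall>j<length ys. ys ! j < n0 + j)"

lemma valid_snoc: "valid n0 (ys @ [x]) \<longleftrightarrow> valid n0 ys \<and> x < n0 + length ys"
  unfolding valid_def by (auto simp: nth_append less_Suc_eq)

lemma valid_Nil[simp]: "valid n0 []" by (simp add: valid_def)

lemma valid_append: "valid n0 (ys @ zs) \<Longrightarrow> valid n0 ys"
  unfolding valid_def by (metis length_append nth_append trans_less_add1)

lemma valid_take: "valid n0 xs \<Longrightarrow> valid n0 (take m xs)"
  unfolding valid_def by auto

lemma valid_notin: "valid n0 ys \<Longrightarrow> n0 + length ys \<le> v \<Longrightarrow> v \<notin> set ys"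
  unfolding valid_def by (auto simp: in_set_conv_nth)

lemma seed_deg_out: "E \<subseteq> {..<n0} \<times> {..<n0} \<Longrightarrow> n0 \<le> v \<Longrightarrow> seed_deg E v = 0"
proof -
  assume "E \<subseteq> {..<n0} \<times> {..<n0}" "n0 \<le> v"
  then have "{u. (v, u) \<in> E} = {}" by auto
  then show ?thesis unfolding seed_deg_def by simp
qed

lemma deg_out:
  assumes "E \<subseteq> {..<n0} \<times> {..<n0}" "valid n0 ys" "n0 + length ys \<le> v"
  shows "pa_deg E n0 ys v = 0"
  using assms seed_deg_out[OF assms(1)] valid_notin[OF assms(2,3)]
  unfolding pa_deg_def by (simp add: count_list_0_iff)

lemma deg_snoc_in:
  assumes "v < n0 + length ys"
  shows "pa_deg E n0 (ys @ [x]) v = pa_deg E n0 ys v + (if v = x then 1 else 0)"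
  using assms unfolding pa_deg_def by auto

lemma deg_snoc_new:
  assumes "E \<subseteq> {..<n0} \<times> {..<n0}" "valid n0 ys" "x < n0 + length ys"
  shows "pa_deg E n0 (ys @ [x]) (n0 + length ys) = 1"
proof -
  have "count_list ys (n0 + length ys) = 0"
    using valid_notin[OF assms(2)] by (simp add: count_list_0_iff)
  then show ?thesis using assms seed_deg_out[OF assms(1)] unfolding pa_deg_def by auto
qed

lemma deg_mono_snoc: "pa_deg E n0 ys v \<le> pa_deg E n0 (ys @ [x]) v"
  unfolding pa_deg_def by auto

lemma deg_mono_append: "pa_deg E n0 ys v \<le> pa_deg E n0 (ys @ zs) v"
proof (induction zs rule: rev_induct)
  case (snoc x zs) then show ?case using deg_mono_snoc[of E n0 "ys @ zs" v x] by simp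
qed simp

lemma W_pos:
  assumes "E \<subseteq> {..<n0} \<times> {..<n0}" "E \<noteq> {}" "\<alpha> > 0"
  shows "1 \<le> pa_W \<alpha> E n0 ys"
proof -
  obtain a b where ab: "(a, b) \<in> E" using assms(2) by auto
  have a: "a < n0 + length ys" using ab assms(1) by auto
  have "finite {u. (a, u) \<in> E}"
    by (rule finite_subset[of _ "{..<n0}"]) (use assms(1) in auto)
  then have "seed_deg E a \<ge> 1" unfolding seed_deg_def using ab
    by (metis (mono_tags, lifting) One_nat_def Suc_leI card_gt_0_iff empty_iff mem_Collect_eq)
  then have "pa_deg E n0 ys a \<ge> 1" unfolding pa_deg_def by simp
  then have 1: "1 \<le> real (pa_deg E n0 ys a) powr \<alpha>"
    using assms(3) by (intro ge_one_powr_ge_zero) auto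
  have "real (pa_deg E n0 ys a) powr \<alpha> \<le> pa_W \<alpha> E n0 ys"
    unfolding pa_W_def using a by (intro member_le_sum) auto
  then show ?thesis using 1 by linarith
qed

lemma pmf_weighted:
  assumes "finite A" "\<And>v. v \<in> A \<Longrightarrow> 0 \<le> f v" "0 < sum f A"
  shows "pmf (weighted_pmf f A) v = (if v \<in> A then f v / sum f A else 0)"
  unfolding weighted_pmf_def
proof (rule pmf_embed_pmf)
  show "\<And>x. 0 \<le> (if x \<in> A then f x / sum f A else 0)" using assms by auto
  have "(\<integral>\<^sup>+x. ennreal (if x \<in> A then f x / sum f A else 0) \<partial>count_space UNIV)
       = (\<Sum>x\<in>A. ennreal (if x \<in> A then f x / sum f A else 0))"
    by (rule nn_integral_count_space') (use assms in auto)
  also have "\<dots> = ennreal (\<Sum>x\<in>A. f x / sum f A)"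
    using assms by (subst sum_ennreal) auto
  also have "(\<Sum>x\<in>A. f x / sum f A) = 1"
    using assms by (simp add: sum_divide_distrib[symmetric])
  finally show "(\<integral>\<^sup>+x. ennreal (if x \<in> A then f x / sum f A else 0) \<partial>count_space UNIV) = 1"
    by simp
qed

lemma W_snoc:
  assumes "E \<subseteq> {..<n0} \<times> {..<n0}" "valid n0 ys" "x < n0 + length ys" "\<alpha> > 0"
  shows "pa_W \<alpha> E n0 (ys @ [x]) = pa_W \<alpha> E n0 ys + 1
     + (real (pa_deg E n0 ys x + 1) powr \<alpha> - real (pa_deg E n0 ys x) powr \<alpha>)"
proof -
  let ?L = "n0 + length ys"
  let ?c = "real (pa_deg E n0 ys x + 1) powr \<alpha> - real (pa_deg E n0 ys x) powr \<alpha>"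
  have "pa_W \<alpha> E n0 (ys @ [x]) = (\<Sum>v<Suc ?L. real (pa_deg E n0 (ys @ [x]) v) powr \<alpha>)"
    unfolding pa_W_def by simp
  also have "\<dots> = (\<Sum>v<?L. real (pa_deg E n0 (ys @ [x]) v) powr \<alpha>) + 1"
    using deg_snoc_new[OF assms(1-3)] by simp
  also have "(\<Sum>v<?L. real (pa_deg E n0 (ys @ [x]) v) powr \<alpha>)
      = (\<Sum>v<?L. real (pa_deg E n0 ys v) powr \<alpha> + (if v = x then ?c else 0))"
    by (intro sum.cong refl) (auto simp: deg_snoc_in add.commute)
  also have "\<dots> = pa_W \<alpha> E n0 ys + ?c"
    using assms(3) by (simp add: sum.distrib pa_W_def add.commute)
  finally show ?thesis by simp
qed

lemma powr_mvt:
  assumes "(x::real) > 0"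
  shows "\<exists>z. x < z \<and> z < x + 1 \<and> (x + 1) powr a - x powr a = a * z powr (a - 1)"
proof -
  have "\<exists>z. x < z \<and> z < x + 1 \<and> (x + 1) powr a - x powr a = (x + 1 - x) * (a * z powr (a - 1))"
    by (rule MVT2) (use assms in \<open>auto intro!: has_real_derivative_powr\<close>)
  then show ?thesis by simp
qed

lemma g_nonneg:
  assumes "\<alpha> > 0" shows "0 \<le> real (d + 1) powr \<alpha> - real d powr \<alpha>"
  using assms by (simp add: powr_mono2)

lemma g_le1:
  assumes "\<alpha> > 0" "\<alpha> \<le> 1" shows "real (d + 1) powr \<alpha> - real d powr \<alpha> \<le> 1"
proof (cases "d = 0")
  case True then show ?thesis by simp
next
  case False
  then obtain z where z: "real d < z" "z < real d + 1"
    "(real d + 1) powr \<alpha> - real d powr \<alpha> = \<alpha> * z powr (\<alpha> - 1)"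
    using powr_mvt[of "real d" \<alpha>] by auto
  have "z \<ge> 1" using z False by linarith
  then have "z powr (\<alpha> - 1) \<le> z powr 0" using assms by (intro powr_mono) auto
  then have "z powr (\<alpha> - 1) \<le> 1" using \<open>z \<ge> 1\<close> by simp
  then have "\<alpha> * z powr (\<alpha> - 1) \<le> 1 * 1" using assms by (intro mult_mono) auto
  then show ?thesis using z by (simp add: add.commute)
qed

lemma g_ge1:
  assumes "\<alpha> \<ge> 1" shows "1 \<le> real (d + 1) powr \<alpha> - real d powr \<alpha>"
proof (cases "d = 0")
  case True then show ?thesis using assms by simp
next
  case False
  then obtain z where z: "real d < z" "z < real d + 1"
    "(real d + 1) powr \<alpha> - real d powr \<alpha> = \<alpha> * z powr (\<alpha> - 1)"
    using powr_mvt[of "real d" \<alpha>] by auto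
  have "z \<ge> 1" using z False by linarith
  then have "1 \<le> z powr (\<alpha> - 1)" using assms by (intro ge_one_powr_ge_zero) auto
  then have "1 * 1 \<le> \<alpha> * z powr (\<alpha> - 1)" using assms by (intro mult_mono) auto
  then show ?thesis using z by (simp add: add.commute)
qed

lemma g_mono:
  assumes "\<alpha> \<ge> 1" "d \<le> b"
  shows "real (d + 1) powr \<alpha> - real d powr \<alpha> \<le> real (b + 1) powr \<alpha> - real b powr \<alpha>"
proof (cases "d = b")
  case True then show ?thesis by simp
next
  case False
  show ?thesis
  proof (cases "d = 0")
    case True then show ?thesis using g_ge1[OF assms(1), of b] by simp
  next
    case d0: False
    then obtain z where z: "real d < z" "z < real d + 1"
      "(real d + 1) powr \<alpha> - real d powr \<alpha> = \<alpha> * z powr (\<alpha> - 1)"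
      using powr_mvt[of "real d" \<alpha>] by auto
    have "b > 0" using assms False by auto
    then obtain y where y: "real b < y" "y < real b + 1"
      "(real b + 1) powr \<alpha> - real b powr \<alpha> = \<alpha> * y powr (\<alpha> - 1)"
      using powr_mvt[of "real b" \<alpha>] by auto
    have "d + 1 \<le> b" using assms False by auto
    then have "z \<le> y" using z y by (metis add.commute of_nat_1 of_nat_add of_nat_le_iff less_le_trans less_imp_le order.strict_trans1)
    then have "z powr (\<alpha> - 1) \<le> y powr (\<alpha> - 1)" using assms z by (intro powr_mono2) auto
    then have "\<alpha> * z powr (\<alpha> - 1) \<le> \<alpha> * y powr (\<alpha> - 1)" using assms by simp
    then show ?thesis using z y by (simp add: add.commute)
  qed
qed

lemma Delta_ge1:
  assumes "E \<subseteq> {..<n0} \<times> {..<n0}" "E \<noteq> {}"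
  shows "1 \<le> pa_Delta E n0 hs"
proof -
  obtain a b where ab: "(a, b) \<in> E" using assms(2) by auto
  have a: "a < n0 + length hs" using ab assms(1) by auto
  have "finite {u. (a, u) \<in> E}"
    by (rule finite_subset[of _ "{..<n0}"]) (use assms(1) in auto)
  then have "seed_deg E a \<ge> 1" unfolding seed_deg_def using ab
    by (metis (mono_tags, lifting) One_nat_def Suc_leI card_gt_0_iff empty_iff mem_Collect_eq)
  then have "pa_deg E n0 hs a \<ge> 1" unfolding pa_deg_def by simp
  moreover have "pa_deg E n0 hs a \<le> pa_Delta E n0 hs"
    unfolding pa_Delta_def using a by (intro Max_ge) auto
  ultimately show ?thesis by linarith
qed

lemma deg_le_Delta:
  assumes "E \<subseteq> {..<n0} \<times> {..<n0}" "E \<noteq> {}" "valid n0 hs"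
  shows "pa_deg E n0 (hs @ zs) v \<le> pa_Delta E n0 hs + length zs"
proof (cases "v < n0 + length hs")
  case True
  have "pa_deg E n0 (hs @ zs) v = pa_deg E n0 hs v + count_list zs v"
    using True unfolding pa_deg_def by auto
  moreover have "pa_deg E n0 hs v \<le> pa_Delta E n0 hs"
    unfolding pa_Delta_def using True by (intro Max_ge) auto
  moreover have "count_list zs v \<le> length zs" by (rule count_le_length)
  ultimately show ?thesis by linarith
next
  case False
  have "pa_deg E n0 hs v = 0" using deg_out[OF assms(1,3)] False by simp
  then have "pa_deg E n0 (hs @ zs) v \<le> count_list zs v + 1"
    unfolding pa_deg_def by (auto split: if_splits)
  then show ?thesis using count_le_length[of zs v] Delta_ge1[OF assms(1,2), of hs] by linarith
qed

definition Bd :: "real \<Rightarrow> nat \<Rightarrow> nat \<Rightarrow> real" where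
  "Bd \<alpha> D k = (if \<alpha> \<le> 1 then 2 * real k else 2 * ((real D + real k) powr \<alpha> - real D powr \<alpha>))"

lemma W_bounds:
  assumes "E \<subseteq> {..<n0} \<times> {..<n0}" "E \<noteq> {}" "\<alpha> > 0" "valid n0 (hs @ zs)"
  shows "pa_W \<alpha> E n0 hs + real (length zs) \<le> pa_W \<alpha> E n0 (hs @ zs)
    \<and> pa_W \<alpha> E n0 (hs @ zs) \<le> pa_W \<alpha> E n0 hs + Bd \<alpha> (pa_Delta E n0 hs) (length zs)"
  using assms(4)
proof (induction zs rule: rev_induct)
  case Nil then show ?case by (simp add: Bd_def)
next
  case (snoc x zs)
  let ?D = "pa_Delta E n0 hs"
  let ?k = "length zs"
  have v: "valid n0 (hs @ zs)" "x < n0 + length (hs @ zs)"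
    using snoc.prems valid_snoc[of n0 "hs @ zs" x] by auto
  have vh: "valid n0 hs" using v(1) valid_append by blast
  define d where "d = pa_deg E n0 (hs @ zs) x"
  have step: "pa_W \<alpha> E n0 (hs @ zs @ [x]) = pa_W \<alpha> E n0 (hs @ zs) + 1
     + (real (d + 1) powr \<alpha> - real d powr \<alpha>)"
    using W_snoc[OF assms(1) v assms(3)] unfolding d_def by simp
  have dle: "d \<le> ?D + ?k" unfolding d_def using deg_le_Delta[OF assms(1,2) vh] by blast
  have g0: "0 \<le> real (d + 1) powr \<alpha> - real d powr \<alpha>" using g_nonneg[OF assms(3)] .
  have "1 + (real (d + 1) powr \<alpha> - real d powr \<alpha>) \<le> Bd \<alpha> ?D (Suc ?k) - Bd \<alpha> ?D ?k"
  proof (cases "\<alpha> \<le> 1")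
    case True
    then show ?thesis using g_le1[OF assms(3) True, of d] by (simp add: Bd_def)
  next
    case False
    then have a1: "\<alpha> \<ge> 1" by simp
    have "real (d + 1) powr \<alpha> - real d powr \<alpha> \<le> real (?D + ?k + 1) powr \<alpha> - real (?D + ?k) powr \<alpha>"
      by (rule g_mono[OF a1 dle])
    moreover have "1 \<le> real (?D + ?k + 1) powr \<alpha> - real (?D + ?k) powr \<alpha>"
      by (rule g_ge1[OF a1])
    ultimately show ?thesis using False by (simp add: Bd_def algebra_simps)
  qed
  then show ?case using snoc.IH[OF v(1)] step g0 by simp
qed

lemma W_le_Wprime:
  assumes "E \<subseteq> {..<n0} \<times> {..<n0}" "E \<noteq> {}" "\<alpha> > 0" "valid n0 (hs @ zs)"
  shows "pa_W \<alpha> E n0 (hs @ zs) \<le> pa_Wprime \<alpha> E n0 hs (Suc (length (hs @ zs)))"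
  using W_bounds[OF assms] unfolding pa_Wprime_def Bd_def Let_def by (auto split: if_splits)

lemma W_ge:
  assumes "E \<subseteq> {..<n0} \<times> {..<n0}" "E \<noteq> {}" "\<alpha> > 0" "valid n0 (hs @ zs)"
  shows "pa_W \<alpha> E n0 hs + real (length zs) \<le> pa_W \<alpha> E n0 (hs @ zs)"
  using W_bounds[OF assms] by blast

lemma Wprime_start: "pa_Wprime \<alpha> E n0 hs (Suc (length hs)) = pa_W \<alpha> E n0 hs"
  unfolding pa_Wprime_def Let_def by simp

definition target :: "real \<Rightarrow> (nat \<times> nat) set \<Rightarrow> nat \<Rightarrow> nat list \<Rightarrow> nat pmf" where
  "target \<alpha> E n0 ys = weighted_pmf (\<lambda>v. real (pa_deg E n0 ys v) powr \<alpha>) {..<n0 + length ys}"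

lemma mix_alg:
  fixes Ws Wc W' a b :: real
  assumes "0 < Ws" "Ws < Wc" "Wc \<le> W'"
  shows "Ws / W' * (a / Ws) + (1 - Ws / W') * ((Wc - Ws) / (W' - Ws) * ((b - a) / (Wc - Ws))
          + (1 - (Wc - Ws) / (W' - Ws)) * (b / Wc)) = b / Wc"
proof -
  have n: "W' - Ws \<noteq> 0" "Wc - Ws \<noteq> 0" "W' \<noteq> 0" "Wc \<noteq> 0" "Ws \<noteq> 0" using assms by auto
  have 1: "Ws / W' * (a / Ws) = a / W'" using n by simp
  have 2: "1 - Ws / W' = (W' - Ws) / W'" using n by (simp add: field_simps)
  have 3: "1 - (Wc - Ws) / (W' - Ws) = (W' - Wc) / (W' - Ws)" using n by (simp add: field_simps)
  have 4: "(W' - Ws) / W' * ((Wc - Ws) / (W' - Ws) * ((b - a) / (Wc - Ws)) + (W' - Wc) / (W' - Ws) * (b / Wc))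
     = (b - a) / W' + (W' - Wc) * b / (W' * Wc)"
  proof -
    have x: "(W' - Ws) / W' * ((Wc - Ws) / (W' - Ws) * ((b - a) / (Wc - Ws))) = (b - a) / W'"
      using n by simp
    have y: "(W' - Ws) / W' * ((W' - Wc) / (W' - Ws) * (b / Wc)) = (W' - Wc) * b / (W' * Wc)"
      using n by simp
    show ?thesis unfolding distrib_left x y ..
  qed
  have 5: "a / W' + ((b - a) / W' + (W' - Wc) * b / (W' * Wc)) = b / Wc" using n by (simp add: field_simps)
  show ?thesis unfolding 1 2 3 4 using 5 by simp
qed

locale PA =
  fixes \<alpha> :: real and E :: "(nat \<times> nat) set" and n0 :: nat
  assumes Ein: "E \<subseteq> {..<n0} \<times> {..<n0}" and Ene: "E \<noteq> {}" and apos: "\<alpha> > 0"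
begin

lemma pmf_target0:
  "pmf (target \<alpha> E n0 ys) v = (if v < n0 + length ys then real (pa_deg E n0 ys v) powr \<alpha> / pa_W \<alpha> E n0 ys else 0)"
  unfolding target_def
  by (subst pmf_weighted) (use W_pos[OF Ein Ene apos, of ys] in \<open>auto simp: pa_W_def\<close>)

lemma pmf_target:
  assumes "valid n0 ys"
  shows "pmf (target \<alpha> E n0 ys) v = real (pa_deg E n0 ys v) powr \<alpha> / pa_W \<alpha> E n0 ys"
  using pmf_target0 deg_out[OF Ein assms, of v] by auto

lemma set_target: "h \<in> set_pmf (target \<alpha> E n0 ys) \<Longrightarrow> h < n0 + length ys"
  using pmf_target0[of ys h] by (auto simp: set_pmf_iff split: if_splits)

lemma mixture:
  assumes v: "valid n0 (hs @ zs)"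
  defines "cur \<equiv> hs @ zs"
  defines "Ws \<equiv> pa_W \<alpha> E n0 hs" and "Wc \<equiv> pa_W \<alpha> E n0 cur"
    and "W' \<equiv> pa_Wprime \<alpha> E n0 hs (Suc (length cur))"
  defines "P2 \<equiv> weighted_pmf (\<lambda>v. real (pa_deg E n0 cur v) powr \<alpha> - real (pa_deg E n0 hs v) powr \<alpha>)
                 {..<n0 + length cur}"
  shows "bind_pmf (bernoulli_pmf (Ws / W'))
           (\<lambda>c. if c then target \<alpha> E n0 hs
                 else bind_pmf (bernoulli_pmf ((Wc - Ws) / (W' - Ws)))
                        (\<lambda>c'. if c' then P2 else target \<alpha> E n0 cur))
         = target \<alpha> E n0 cur"
proof (rule pmf_eqI)
  fix h
  have vh: "valid n0 hs" using v valid_append by blast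
  have vc: "valid n0 cur" using v cur_def by simp
  have Wspos: "1 \<le> Ws" unfolding Ws_def by (rule W_pos[OF Ein Ene apos])
  have Wge: "Ws + real (length zs) \<le> Wc" unfolding Ws_def Wc_def cur_def by (rule W_ge[OF Ein Ene apos v])
  have Wle: "Wc \<le> W'" unfolding W'_def Wc_def cur_def by (rule W_le_Wprime[OF Ein Ene apos v])
  define q where "q = Ws / W'"
  define p where "p = (Wc - Ws) / (W' - Ws)"
  have q01: "0 \<le> q" "q \<le> 1" using Wspos Wge Wle unfolding q_def by auto
  have p01: "0 \<le> p" "p \<le> 1" using Wspos Wge Wle unfolding p_def
    by (auto simp: divide_simps)
  have P1: "pmf (target \<alpha> E n0 hs) h = real (pa_deg E n0 hs h) powr \<alpha> / Ws"
    using pmf_target[OF vh] Ws_def by simp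
  have P3: "pmf (target \<alpha> E n0 cur) h = real (pa_deg E n0 cur h) powr \<alpha> / Wc"
    using pmf_target[OF vc] Wc_def by simp
  have "pmf (bind_pmf (bernoulli_pmf q)
           (\<lambda>c. if c then target \<alpha> E n0 hs
                 else bind_pmf (bernoulli_pmf p) (\<lambda>c'. if c' then P2 else target \<alpha> E n0 cur))) h
      = q * pmf (target \<alpha> E n0 hs) h + (1 - q) * (p * pmf P2 h + (1 - p) * pmf (target \<alpha> E n0 cur) h)"
    using q01 p01 by (simp add: pmf_bind algebra_simps)
  also have "\<dots> = pmf (target \<alpha> E n0 cur) h"
  proof (cases "zs = []")
    case True
    then have "q = 1" using Wspos unfolding q_def W'_def cur_def Ws_def by (simp add: Wprime_start)
    then show ?thesis using True cur_def by simp
  next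
    case False
    then have "real (length zs) > 0" by simp
    then have lt: "Ws < Wc" using Wge by linarith
    have mono: "real (pa_deg E n0 hs v) powr \<alpha> \<le> real (pa_deg E n0 cur v) powr \<alpha>" for v
      unfolding cur_def using apos by (intro powr_mono2) (auto simp: deg_mono_append)
    have sumhs: "(\<Sum>v<n0 + length cur. real (pa_deg E n0 hs v) powr \<alpha>) = Ws"
    proof -
      have "(\<Sum>v<n0 + length cur. real (pa_deg E n0 hs v) powr \<alpha>)
           = (\<Sum>v<n0 + length hs. real (pa_deg E n0 hs v) powr \<alpha>)"
        by (rule sum.mono_neutral_right) (auto simp: cur_def deg_out[OF Ein vh])
      then show ?thesis by (simp add: Ws_def pa_W_def)
    qed
    have sum2: "(\<Sum>v<n0 + length cur. real (pa_deg E n0 cur v) powr \<alpha> - real (pa_deg E n0 hs v) powr \<alpha>) = Wc - Ws"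
      by (simp add: sum_subtractf sumhs Wc_def pa_W_def)
    have P2h: "pmf P2 h = (real (pa_deg E n0 cur h) powr \<alpha> - real (pa_deg E n0 hs h) powr \<alpha>) / (Wc - Ws)"
      unfolding P2_def
      by (subst pmf_weighted) (use mono lt sum2 deg_out[OF Ein vc, of h] deg_out[OF Ein vh, of h] in \<open>auto simp: cur_def\<close>)
    have W'pos: "W' - Ws > 0" using lt Wle by simp
    show ?thesis unfolding P1 P3 P2h q_def p_def using Wspos lt Wle
      by (intro mix_alg) auto
  qed
  finally show "pmf (bind_pmf (bernoulli_pmf (Ws / W'))
           (\<lambda>c. if c then target \<alpha> E n0 hs
                 else bind_pmf (bernoulli_pmf ((Wc - Ws) / (W' - Ws)))
                        (\<lambda>c'. if c' then P2 else target \<alpha> E n0 cur))) h = pmf (target \<alpha> E n0 cur) h"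
    unfolding q_def p_def .
qed

end

primrec seq_run :: "real \<Rightarrow> (nat \<times> nat) set \<Rightarrow> nat \<Rightarrow> nat \<Rightarrow> nat list \<Rightarrow> nat list pmf" where
  "seq_run \<alpha> E n0 0 ys = return_pmf ys"
| "seq_run \<alpha> E n0 (Suc k) ys = bind_pmf (target \<alpha> E n0 ys) (\<lambda>h. seq_run \<alpha> E n0 k (ys @ [h]))"

definition phase3 :: "real \<Rightarrow> (nat \<times> nat) set \<Rightarrow> nat \<Rightarrow> nat list \<Rightarrow> nat list \<Rightarrow> nat list pmf" where
  "phase3 \<alpha> E n0 hs cur =
     bind_pmf (bernoulli_pmf ((pa_W \<alpha> E n0 cur - pa_W \<alpha> E n0 hs) / (pa_Wprime \<alpha> E n0 hs (Suc (length cur)) - pa_W \<alpha> E n0 hs)))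
                 (\<lambda>c. bind_pmf
                   (if c then weighted_pmf
                        (\<lambda>v. real (pa_deg E n0 cur v) powr \<alpha> - real (pa_deg E n0 hs v) powr \<alpha>)
                        {..<n0 + length cur}
                    else weighted_pmf (\<lambda>v. real (pa_deg E n0 cur v) powr \<alpha>) {..<n0 + length cur})
                   (\<lambda>h. return_pmf (cur @ [h])))"

fun Tb :: "real \<Rightarrow> (nat \<times> nat) set \<Rightarrow> nat \<Rightarrow> nat list \<Rightarrow> nat list \<Rightarrow> bool list \<Rightarrow> nat list \<Rightarrow> nat list pmf" where
  "Tb \<alpha> E n0 hs cur [] ds = return_pmf cur"
| "Tb \<alpha> E n0 hs cur (c # cs) [] = return_pmf cur"
| "Tb \<alpha> E n0 hs cur (c # cs) (d # ds) = (if c then Tb \<alpha> E n0 hs (cur @ [d]) cs ds else phase3 \<alpha> E n0 hs cur)"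

lemma Tb_eq:
  "length cs = length ds \<Longrightarrow> Tb \<alpha> E n0 hs cur cs ds =
    (let m = length (takeWhile id cs); hs1 = cur @ take m ds
     in if m < length cs then phase3 \<alpha> E n0 hs hs1 else return_pmf hs1)"
proof (induction cs arbitrary: cur ds)
  case Nil then show ?case by simp
next
  case (Cons c cs)
  then obtain d ds' where ds: "ds = d # ds'" by (cases ds) auto
  show ?case using Cons.IH[of ds' "cur @ [d]"] Cons.prems ds by (auto simp: Let_def)
qed

lemma seq_pmf_length: "xs \<in> set_pmf (seq_pmf ps) \<Longrightarrow> length xs = length ps"
  by (induction ps arbitrary: xs) auto

lemma par_batch_eq:
  "par_batch \<alpha> E n0 N hs =
    bind_pmf (seq_pmf (map (\<lambda>i. bernoulli_pmf (pa_W \<alpha> E n0 hs / pa_Wprime \<alpha> E n0 hs i)) [Suc (length hs)..<Suc N]))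
     (\<lambda>cs. bind_pmf (seq_pmf (map (\<lambda>i. target \<alpha> E n0 hs) [Suc (length hs)..<Suc N]))
       (\<lambda>ds. Tb \<alpha> E n0 hs hs cs ds))"
  unfolding par_batch_def Let_def target_def
proof (intro bind_pmf_cong refl)
  fix cs ds
  assume cs: "cs \<in> set_pmf (seq_pmf (map (\<lambda>i. bernoulli_pmf (pa_W \<alpha> E n0 hs / pa_Wprime \<alpha> E n0 hs i)) [Suc (length hs)..<Suc N]))"
    and ds: "ds \<in> set_pmf (seq_pmf (map (\<lambda>i. weighted_pmf (\<lambda>v. real (pa_deg E n0 hs v) powr \<alpha>) {..<n0 + length hs}) [Suc (length hs)..<Suc N]))"
  have lc: "length cs = N - length hs" using seq_pmf_length[OF cs] by (simp del: upt_Suc)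
  have ld: "length ds = N - length hs" using seq_pmf_length[OF ds] by (simp del: upt_Suc)
  define m where "m = length (takeWhile id cs)"
  have mle: "m \<le> length cs" unfolding m_def by (rule length_takeWhile_le)
  have lt: "length (take m ds) = m" using mle lc ld by simp
  show "(if Suc (length hs) + length (takeWhile id cs) \<le> N
         then bernoulli_pmf ((pa_W \<alpha> E n0 (hs @ take (length (takeWhile id cs)) ds) - pa_W \<alpha> E n0 hs) /
                             (pa_Wprime \<alpha> E n0 hs (Suc (length hs) + length (takeWhile id cs)) - pa_W \<alpha> E n0 hs)) \<bind>
              (\<lambda>c. (if c then weighted_pmf (\<lambda>v. real (pa_deg E n0 (hs @ take (length (takeWhile id cs)) ds) v) powr \<alpha> -
                                                real (pa_deg E n0 hs v) powr \<alpha>)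
                               {..<n0 + length (hs @ take (length (takeWhile id cs)) ds)}
                     else weighted_pmf (\<lambda>v. real (pa_deg E n0 (hs @ take (length (takeWhile id cs)) ds) v) powr \<alpha>)
                           {..<n0 + length (hs @ take (length (takeWhile id cs)) ds)}) \<bind>
                   (\<lambda>h. return_pmf ((hs @ take (length (takeWhile id cs)) ds) @ [h])))
         else return_pmf (hs @ take (length (takeWhile id cs)) ds)) =
        Tb \<alpha> E n0 hs hs cs ds"
    unfolding Tb_eq[OF lc[folded ld, symmetric, symmetric]] Let_def phase3_def m_def[symmetric]
    using lt lc mle by auto
qed

context PA
begin

lemma P2_sum:
  assumes v: "valid n0 (hs @ zs)"
  shows "(\<Sum>v<n0 + length (hs @ zs). real (pa_deg E n0 (hs @ zs) v) powr \<alpha> - real (pa_deg E n0 hs v) powr \<alpha>)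
     = pa_W \<alpha> E n0 (hs @ zs) - pa_W \<alpha> E n0 hs"
proof -
  have vh: "valid n0 hs" using v valid_append by blast
  have "(\<Sum>v<n0 + length (hs @ zs). real (pa_deg E n0 hs v) powr \<alpha>)
       = (\<Sum>v<n0 + length hs. real (pa_deg E n0 hs v) powr \<alpha>)"
    by (rule sum.mono_neutral_right) (auto simp: deg_out[OF Ein vh])
  then show ?thesis by (simp add: sum_subtractf pa_W_def)
qed

lemma phase3_set:
  assumes v: "valid n0 (hs @ zs)" and ys: "ys \<in> set_pmf (phase3 \<alpha> E n0 hs (hs @ zs))"
  shows "\<exists>h. ys = (hs @ zs) @ [h] \<and> h < n0 + length (hs @ zs)"
proof -
  let ?cur = "hs @ zs"
  let ?p = "(pa_W \<alpha> E n0 ?cur - pa_W \<alpha> E n0 hs) / (pa_Wprime \<alpha> E n0 hs (Suc (length ?cur)) - pa_W \<alpha> E n0 hs)"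
  let ?P2 = "weighted_pmf (\<lambda>v. real (pa_deg E n0 ?cur v) powr \<alpha> - real (pa_deg E n0 hs v) powr \<alpha>) {..<n0 + length ?cur}"
  obtain c h where c: "c \<in> set_pmf (bernoulli_pmf ?p)"
    and h: "h \<in> set_pmf (if c then ?P2 else target \<alpha> E n0 ?cur)" and ysh: "ys = ?cur @ [h]"
    using ys unfolding phase3_def target_def[symmetric] by auto
  have "h < n0 + length ?cur"
  proof (cases c)
    case False then show ?thesis using h set_target[of h ?cur] by auto
  next
    case True
    have Wge: "pa_W \<alpha> E n0 hs + real (length zs) \<le> pa_W \<alpha> E n0 ?cur" by (rule W_ge[OF Ein Ene apos v])
    have Wle: "pa_W \<alpha> E n0 ?cur \<le> pa_Wprime \<alpha> E n0 hs (Suc (length ?cur))" by (rule W_le_Wprime[OF Ein Ene apos v])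
    have "zs \<noteq> []"
    proof
      assume "zs = []"
      then have p0: "?p = 0" by simp
      have "True \<in> set_pmf (bernoulli_pmf ?p)" using c True by simp
      then have "True \<in> set_pmf (bernoulli_pmf 0)" unfolding p0 .
      then show False by (simp add: set_pmf_iff)
    qed
    then have "real (length zs) > 0" by simp
    then have lt: "pa_W \<alpha> E n0 hs < pa_W \<alpha> E n0 ?cur" using Wge by linarith
    have mono: "real (pa_deg E n0 hs v) powr \<alpha> \<le> real (pa_deg E n0 ?cur v) powr \<alpha>" for v
      using apos by (intro powr_mono2) (auto simp: deg_mono_append)
    have "pmf ?P2 h \<noteq> 0" using h True by (simp add: set_pmf_iff)
    then show ?thesis
      by (subst (asm) pmf_weighted) (use mono lt P2_sum[OF v] in \<open>auto split: if_splits\<close>)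
  qed
  then show ?thesis using ysh by blast
qed

end

lemma bind_if_pmf: "bind_pmf (if c then A else B) f = (if c then bind_pmf A f else bind_pmf B f)"
  by simp

context PA
begin

definition Phi :: "nat \<Rightarrow> nat list \<Rightarrow> nat list pmf" where
  "Phi N ys = seq_run \<alpha> E n0 (N - length ys) ys"

lemma Phi_step:
  assumes "length cur < N"
  shows "Phi N cur = bind_pmf (target \<alpha> E n0 cur) (\<lambda>h. Phi N (cur @ [h]))"
proof -
  obtain k where k: "N - length cur = Suc k" using assms by (metis Suc_diff_Suc)
  then have "N - length (cur @ [h]) = k" for h by simp
  then show ?thesis unfolding Phi_def k by simp
qed

lemma one_step:
  assumes v: "valid n0 (hs @ zs)" and lt: "length (hs @ zs) < N"
  shows "bind_pmf (bernoulli_pmf (pa_W \<alpha> E n0 hs / pa_Wprime \<alpha> E n0 hs (Suc (length (hs @ zs)))))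
     (\<lambda>c. if c then bind_pmf (target \<alpha> E n0 hs) (\<lambda>d. Phi N ((hs @ zs) @ [d]))
          else bind_pmf (phase3 \<alpha> E n0 hs (hs @ zs)) (Phi N))
    = Phi N (hs @ zs)"
proof -
  let ?cur = "hs @ zs"
  have "Phi N ?cur = bind_pmf (target \<alpha> E n0 ?cur) (\<lambda>h. Phi N (?cur @ [h]))"
    by (rule Phi_step[OF lt])
  also note mixture[OF v, symmetric]
  finally show ?thesis
    unfolding phase3_def target_def[symmetric]
    by (simp add: bind_assoc_pmf bind_return_pmf bind_if_pmf cong: if_cong)
qed

lemma batch_ind:
  assumes vh: "valid n0 hs" and hN: "length hs < N"
    and Psi: "\<And>ys. valid n0 ys \<Longrightarrow> length hs < length ys \<Longrightarrow> length ys \<le> N \<Longrightarrow> Psi ys = Phi N ys"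
  shows "N - length (hs @ zs) = k \<Longrightarrow> valid n0 (hs @ zs) \<Longrightarrow> length (hs @ zs) \<le> N \<Longrightarrow>
    bind_pmf (seq_pmf (map (\<lambda>i. bernoulli_pmf (pa_W \<alpha> E n0 hs / pa_Wprime \<alpha> E n0 hs i)) [Suc (length (hs @ zs))..<Suc N]))
     (\<lambda>cs. bind_pmf (seq_pmf (map (\<lambda>i. target \<alpha> E n0 hs) [Suc (length (hs @ zs))..<Suc N]))
       (\<lambda>ds. bind_pmf (Tb \<alpha> E n0 hs (hs @ zs) cs ds) Psi)) = Phi N (hs @ zs)"
proof (induction k arbitrary: zs)
  case 0
  then have eq: "length (hs @ zs) = N" by simp
  then have "Psi (hs @ zs) = Phi N (hs @ zs)" using Psi[OF 0(2)] hN by simp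
  then show ?case using eq by (simp add: bind_return_pmf)
next
  case (Suc k)
  let ?cur = "hs @ zs"
  let ?coin = "\<lambda>i. bernoulli_pmf (pa_W \<alpha> E n0 hs / pa_Wprime \<alpha> E n0 hs i)"
  let ?P1 = "target \<alpha> E n0 hs"
  let ?a = "Suc (length ?cur)"
  have lt: "length ?cur < N" using Suc.prems by simp
  have up: "[?a..<Suc N] = ?a # [Suc ?a..<Suc N]" using lt by (intro upt_conv_Cons) simp
  let ?RC = "map ?coin [Suc ?a..<Suc N]"
  let ?RD = "map (\<lambda>i. ?P1) [Suc ?a..<Suc N]"
  have LHS: "bind_pmf (seq_pmf (map ?coin [?a..<Suc N]))
     (\<lambda>cs. bind_pmf (seq_pmf (map (\<lambda>i. ?P1) [?a..<Suc N]))
       (\<lambda>ds. bind_pmf (Tb \<alpha> E n0 hs ?cur cs ds) Psi))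
    = bind_pmf (?coin ?a) (\<lambda>c. bind_pmf (seq_pmf ?RC) (\<lambda>cs. bind_pmf ?P1 (\<lambda>d. bind_pmf (seq_pmf ?RD)
        (\<lambda>ds. bind_pmf (Tb \<alpha> E n0 hs ?cur (c # cs) (d # ds)) Psi))))"
    unfolding up by (simp add: bind_assoc_pmf bind_return_pmf del: upt_Suc)
  also have "\<dots> = bind_pmf (?coin ?a) (\<lambda>c. if c then bind_pmf ?P1 (\<lambda>d. Phi N (?cur @ [d]))
          else bind_pmf (phase3 \<alpha> E n0 hs ?cur) (Phi N))"
  proof (intro bind_pmf_cong refl)
    fix c :: bool
    show "bind_pmf (seq_pmf ?RC) (\<lambda>cs. bind_pmf ?P1 (\<lambda>d. bind_pmf (seq_pmf ?RD)
        (\<lambda>ds. bind_pmf (Tb \<alpha> E n0 hs ?cur (c # cs) (d # ds)) Psi))) =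
      (if c then bind_pmf ?P1 (\<lambda>d. Phi N (?cur @ [d]))
          else bind_pmf (phase3 \<alpha> E n0 hs ?cur) (Phi N))"
    proof (cases c)
      case True
      have "bind_pmf (seq_pmf ?RC) (\<lambda>cs. bind_pmf ?P1 (\<lambda>d. bind_pmf (seq_pmf ?RD)
          (\<lambda>ds. bind_pmf (Tb \<alpha> E n0 hs ?cur (c # cs) (d # ds)) Psi)))
        = bind_pmf ?P1 (\<lambda>d. bind_pmf (seq_pmf ?RC) (\<lambda>cs. bind_pmf (seq_pmf ?RD)
          (\<lambda>ds. bind_pmf (Tb \<alpha> E n0 hs (?cur @ [d]) cs ds) Psi)))"
        using True by (subst bind_commute_pmf) simp
      also have "\<dots> = bind_pmf ?P1 (\<lambda>d. Phi N (?cur @ [d]))"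
      proof (intro bind_pmf_cong refl)
        fix d assume d: "d \<in> set_pmf ?P1"
        then have dl: "d < n0 + length hs" using set_target by blast
        have v': "valid n0 (hs @ (zs @ [d]))" using Suc.prems(2) dl valid_snoc[of n0 ?cur d] by simp
        have "bind_pmf (seq_pmf (map ?coin [Suc (length (hs @ (zs @ [d])))..<Suc N]))
           (\<lambda>cs. bind_pmf (seq_pmf (map (\<lambda>i. ?P1) [Suc (length (hs @ (zs @ [d])))..<Suc N]))
             (\<lambda>ds. bind_pmf (Tb \<alpha> E n0 hs (hs @ (zs @ [d])) cs ds) Psi)) = Phi N (hs @ (zs @ [d]))"
          by (rule Suc.IH) (use Suc.prems v' in auto)
        then show "bind_pmf (seq_pmf ?RC) (\<lambda>cs. bind_pmf (seq_pmf ?RD)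
          (\<lambda>ds. bind_pmf (Tb \<alpha> E n0 hs (?cur @ [d]) cs ds) Psi)) = Phi N (?cur @ [d])"
          by (simp del: upt_Suc)
      qed
      finally show ?thesis using True by simp
    next
      case False
      have "bind_pmf (phase3 \<alpha> E n0 hs ?cur) Psi = bind_pmf (phase3 \<alpha> E n0 hs ?cur) (Phi N)"
      proof (intro bind_pmf_cong refl)
        fix ys assume "ys \<in> set_pmf (phase3 \<alpha> E n0 hs ?cur)"
        then obtain h where h: "ys = ?cur @ [h]" "h < n0 + length ?cur"
          using phase3_set[OF Suc.prems(2)] by blast
        show "Psi ys = Phi N ys"
          by (rule Psi) (use h Suc.prems(2) lt valid_snoc[of n0 ?cur h] in auto)
      qed
      then show ?thesis using False by simp
    qed
  qed
  also have "\<dots> = Phi N ?cur"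
    by (rule one_step[OF Suc.prems(2) lt])
  finally show ?case .
qed

end

context PA
begin

lemma par_run_eq:
  "valid n0 hs \<Longrightarrow> length hs \<le> N \<Longrightarrow> N - length hs \<le> k \<Longrightarrow> par_run \<alpha> E n0 N k hs = Phi N hs"
proof (induction k arbitrary: hs)
  case 0
  then show ?case by (simp add: Phi_def)
next
  case (Suc k)
  show ?case
  proof (cases "N \<le> length hs")
    case True then show ?thesis using Suc.prems by (simp add: Phi_def)
  next
    case False
    then have hN: "length hs < N" by simp
    have "par_run \<alpha> E n0 N (Suc k) hs = bind_pmf (par_batch \<alpha> E n0 N hs) (par_run \<alpha> E n0 N k)"
      using False by simp
    also have "\<dots> = Phi N (hs @ [])"
    proof -
      have P: "par_run \<alpha> E n0 N k ys = Phi N ys" if "valid n0 ys" "length hs < length ys" "length ys \<le> N" for ys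
        using Suc.IH that Suc.prems by auto
      show ?thesis
        unfolding par_batch_eq bind_assoc_pmf
        using batch_ind[OF Suc.prems(1) hN, of "par_run \<alpha> E n0 N k", OF P, of "[]" "N - length hs"] Suc.prems
        by simp
    qed
    finally show ?thesis by simp
  qed
qed

lemma seq_run_set:
  "ys \<in> set_pmf (seq_run \<alpha> E n0 k cur) \<Longrightarrow> valid n0 cur \<Longrightarrow>
     valid n0 ys \<and> length ys = length cur + k \<and> take (length cur) ys = cur"
proof (induction k arbitrary: cur)
  case 0 then show ?case by simp
next
  case (Suc k)
  then obtain h where h: "h \<in> set_pmf (target \<alpha> E n0 cur)" and ys: "ys \<in> set_pmf (seq_run \<alpha> E n0 k (cur @ [h]))"
    by auto
  have "valid n0 (cur @ [h])" using set_target[OF h] Suc.prems valid_snoc by blast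
  from Suc.IH[OF ys this] have "valid n0 ys" "length ys = length cur + Suc k" "take (Suc (length cur)) ys = cur @ [h]"
    by auto
  moreover then have "take (length cur) ys = cur"
  proof -
    assume t: "take (Suc (length cur)) ys = cur @ [h]"
    have "take (length cur) ys = take (length cur) (take (Suc (length cur)) ys)" by (simp add: min_def)
    then show ?thesis unfolding t by simp
  qed
  ultimately show ?case by simp
qed

end

context PA
begin

lemma emeasure_det:
  assumes "\<And>x. x \<in> set_pmf M \<Longrightarrow> x \<in> A \<longleftrightarrow> P"
  shows "emeasure (measure_pmf M) A = (if P then 1 else 0)"
proof -
  have "emeasure (measure_pmf M) A = emeasure (measure_pmf M) (A \<inter> set_pmf M)"
    by (simp add: emeasure_Int_set_pmf)
  also have "A \<inter> set_pmf M = (if P then set_pmf M else {})" using assms by auto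
  finally show ?thesis by (simp add: emeasure_pmf)
qed

lemma seq_run_prob:
  "valid n0 cur \<Longrightarrow> length cur \<le> length hs \<Longrightarrow> length hs < length cur + k \<Longrightarrow>
   emeasure (measure_pmf (seq_run \<alpha> E n0 k cur)) {xs. take (length hs) xs = hs \<and> xs ! length hs = h}
   = emeasure (measure_pmf (seq_run \<alpha> E n0 k cur)) {xs. take (length hs) xs = hs} * ennreal (pmf (target \<alpha> E n0 hs) h)"
proof (induction k arbitrary: cur)
  case 0 then show ?case by simp
next
  case (Suc k)
  let ?A = "{xs. take (length hs) xs = hs \<and> xs ! length hs = h}"
  let ?B = "{xs. take (length hs) xs = hs}"
  let ?T = "target \<alpha> E n0 cur"
  have vx: "valid n0 (cur @ [x])" if "x \<in> set_pmf ?T" for x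
    using set_target[OF that] Suc.prems(1) valid_snoc by blast
  show ?case
  proof (cases "length hs = length cur")
    case True
    have sup: "take (length cur) ys = cur \<and> ys ! length cur = x"
      if x: "x \<in> set_pmf ?T" and ys: "ys \<in> set_pmf (seq_run \<alpha> E n0 k (cur @ [x]))" for x ys
    proof -
      have "take (Suc (length cur)) ys = cur @ [x]" using seq_run_set[OF ys vx[OF x]] by simp
      then have t: "take (Suc (length cur)) ys = cur @ [x]" .
      have "take (length cur) ys = take (length cur) (take (Suc (length cur)) ys)" by (simp add: min_def)
      then have 1: "take (length cur) ys = cur" unfolding t by simp
      have "ys ! length cur = take (Suc (length cur)) ys ! length cur" by simp
      then have 2: "ys ! length cur = x" unfolding t by simp
      show ?thesis using 1 2 by simp
    qed
    have eA: "emeasure (measure_pmf (seq_run \<alpha> E n0 k (cur @ [x]))) ?A = (if hs = cur then indicator {h} x else 0)"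
      if x: "x \<in> set_pmf ?T" for x
      by (subst emeasure_det[where P = "hs = cur \<and> x = h"]) (use sup[OF x] True in auto)
    have eB: "emeasure (measure_pmf (seq_run \<alpha> E n0 k (cur @ [x]))) ?B = (if hs = cur then 1 else 0)"
      if x: "x \<in> set_pmf ?T" for x
      by (subst emeasure_det[where P = "hs = cur"]) (use sup[OF x] True in auto)
    have "emeasure (measure_pmf (seq_run \<alpha> E n0 (Suc k) cur)) ?A
        = (\<integral>\<^sup>+x. (if hs = cur then indicator {h} x else 0) \<partial>?T)"
      by (simp only: seq_run.simps emeasure_bind_pmf, intro nn_integral_cong_AE) (auto simp: AE_measure_pmf_iff eA)
    also have "\<dots> = (if hs = cur then ennreal (pmf ?T h) else 0)"
      by (simp add: emeasure_pmf_single)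
    finally have A: "emeasure (measure_pmf (seq_run \<alpha> E n0 (Suc k) cur)) ?A = (if hs = cur then ennreal (pmf ?T h) else 0)" .
    have "emeasure (measure_pmf (seq_run \<alpha> E n0 (Suc k) cur)) ?B
        = (\<integral>\<^sup>+x. (if hs = cur then 1 else 0) \<partial>?T)"
      by (simp only: seq_run.simps emeasure_bind_pmf, intro nn_integral_cong_AE) (auto simp: AE_measure_pmf_iff eB)
    also have "\<dots> = (if hs = cur then 1 else 0)" by simp
    finally have B: "emeasure (measure_pmf (seq_run \<alpha> E n0 (Suc k) cur)) ?B = (if hs = cur then 1 else 0)" .
    show ?thesis unfolding A B by simp
  next
    case False
    then have lt: "length (cur @ [x]) \<le> length hs" "length hs < length (cur @ [x]) + k" for x
      using Suc.prems by auto
    have "emeasure (measure_pmf (seq_run \<alpha> E n0 (Suc k) cur)) ?A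
        = (\<integral>\<^sup>+x. emeasure (measure_pmf (seq_run \<alpha> E n0 k (cur @ [x]))) ?B * ennreal (pmf (target \<alpha> E n0 hs) h) \<partial>?T)"
      by (simp only: seq_run.simps emeasure_bind_pmf, intro nn_integral_cong_AE) (auto simp: AE_measure_pmf_iff Suc.IH[OF vx lt])
    also have "\<dots> = emeasure (measure_pmf (seq_run \<alpha> E n0 (Suc k) cur)) ?B * ennreal (pmf (target \<alpha> E n0 hs) h)"
      by (simp add: nn_integral_multc)
    finally show ?thesis .
  qed
qed

end

theorem theorem4:
  fixes \<alpha> :: real and E :: "(nat \<times> nat) set" and n0 N i :: nat
    and hs :: "nat list" and h :: nat
  assumes "\<alpha> > 0"
    and "E \<subseteq> {..<n0} \<times> {..<n0}" and "sym E" and "\<forall>v. (v, v) \<notin> E" and "E \<noteq> {}"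
    and "1 \<le> i" and "i \<le> N" and "length hs = i - 1"
  shows "measure_pmf.prob (ParPolyPA \<alpha> E n0 N) {xs. take (i - 1) xs = hs \<and> xs ! (i - 1) = h}
       = measure_pmf.prob (ParPolyPA \<alpha> E n0 N) {xs. take (i - 1) xs = hs}
         * (real (pa_deg E n0 hs h) powr \<alpha> / pa_W \<alpha> E n0 hs)"
proof -
  interpret PA \<alpha> E n0 by unfold_locales (use assms in auto)
  have R: "ParPolyPA \<alpha> E n0 N = seq_run \<alpha> E n0 N []"
    unfolding ParPolyPA_def using par_run_eq[of "[]" N N] by (simp add: Phi_def)
  let ?R = "measure_pmf (seq_run \<alpha> E n0 N [])"
  let ?A = "{xs. take (length hs) xs = hs \<and> xs ! length hs = h}"
  let ?B = "{xs. take (length hs) xs = hs}"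
  have e: "emeasure ?R ?A = emeasure ?R ?B * ennreal (pmf (target \<alpha> E n0 hs) h)"
    by (rule seq_run_prob) (use assms in auto)
  have m: "measure ?R ?A = measure ?R ?B * pmf (target \<alpha> E n0 hs) h"
    using e by (simp add: measure_pmf.emeasure_eq_measure ennreal_mult'' [symmetric] pmf_nonneg)
  have "measure ?R ?B * pmf (target \<alpha> E n0 hs) h
      = measure ?R ?B * (real (pa_deg E n0 hs h) powr \<alpha> / pa_W \<alpha> E n0 hs)"
  proof (cases "valid n0 hs")
    case True then show ?thesis by (simp add: pmf_target)
  next
    case False
    have "?B \<inter> set_pmf (seq_run \<alpha> E n0 N []) = {}"
    proof (safe)
      fix xs assume "xs \<in> set_pmf (seq_run \<alpha> E n0 N [])" "take (length hs) xs = hs"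
      then show "xs \<in> {}" using seq_run_set[of xs N "[]"] valid_take[of n0 xs "length hs"] False by auto
    qed
    then have "measure ?R ?B = 0" by (metis measure_Int_set_pmf measure_empty)
    then show ?thesis by simp
  qed
  then show ?thesis using m R assms(8) by simp
qed

end
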